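(* Let $l/\mathbb{Q}$ be a totally complex finite Galois extension with group $G$, let $\widehat w$ be an archimedean place of $l$ with $G_{\widehat w}=\{1,\rho\}$, $\rho^2=1$, and let $\beta\in F_l$ be a special Minkowski unit with respect to $\widehat w$. Then $\rho(\beta)$ and $\beta\rho(\beta)$ are special Minkowski units with respect to $\widehat w$. Moreover, if $T=\{\tau_1,\dots,\tau_N\}$ is a transversal for the left cosets of $G_{\widehat w}$ in $G$, then $$\sum_{n=1}^N\log\bigl|\tau_m^{-1}\tau_n(\beta\rho(\beta))\bigr|_{\widehat w}=0\quad\text{for each } m=1,\dots,N.$$
   Context: For a number field $l$, $F_l=O_l^\times/\mathrm{Tor}(O_l^\times)$, with $\mathrm{Aut}(l/\mathbb{Q})$ acting on it. For a place $w$ of $l$, $\|\cdot\|_w$ extends the usual absolute value of $\mathbb{Q}$ and $|\cdot|_w=\|\cdot\|_w^{d_w/d}$ with $d_w=[l_w:\mathbb{Q}_w]$, $d=[l:\mathbb{Q}]$. For $\sigma\in G$, $\sigma w$ is the place with $\|\sigma^{-1}(\gamma)\|_w=\|\gamma\|_{\sigma w}$ for all $\gamma\in l$. $N$ is the number of archimedean places of $l$ and $G_{\widehat w}=\{\sigma\in G:\sigma\widehat w=\widehat w\}$ (of order 2 when $l$ is totally complex). An element $\beta\in F_l$ is a special Minkowski unit with respect to $\widehat w$ if $\log|\beta|_w<0$ for every archimedean place $w\ne\widehat w$. *)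

theory Defs
  imports "HOL-Analysis.Analysis" "HOL-Computational_Algebra.Polynomial"
begin

text \<open>A number field is modelled as a subfield l of the complex numbers that is
finite-dimensional as a vector space over the rationals.\<close>

definition rat_scale :: "rat \<Rightarrow> complex \<Rightarrow> complex" where
  "rat_scale q z = of_rat q * z"

definition subfield_C :: "complex set \<Rightarrow> bool" where
  "subfield_C l \<longleftrightarrow> 0 \<in> l \<and> 1 \<in> l \<and>
     (\<forall>x\<in>l. \<forall>y\<in>l. x + y \<in> l \<and> x * y \<in> l) \<and>
     (\<forall>x\<in>l. - x \<in> l \<and> inverse x \<in> l)"

definition number_field :: "complex set \<Rightarrow> bool" where
  "number_field l \<longleftrightarrow> subfield_C l \<and>
     (\<exists>B. finite B \<and> B \<subseteq> l \<and> l = module.span rat_scale B)"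

definition field_degree :: "complex set \<Rightarrow> nat" where
  "field_degree l = vector_space.dim rat_scale l"

definition embedding :: "complex set \<Rightarrow> (complex \<Rightarrow> complex) \<Rightarrow> bool" where
  "embedding l \<sigma> \<longleftrightarrow> \<sigma> 1 = 1 \<and>
     (\<forall>x\<in>l. \<forall>y\<in>l. \<sigma> (x + y) = \<sigma> x + \<sigma> y \<and> \<sigma> (x * y) = \<sigma> x * \<sigma> y)"

text \<open>l/Q Galois (normal; separability is automatic in characteristic 0).\<close>
definition galois_over_Q :: "complex set \<Rightarrow> bool" where
  "galois_over_Q l \<longleftrightarrow> number_field l \<and> (\<forall>\<sigma>. embedding l \<sigma> \<longrightarrow> \<sigma> ` l \<subseteq> l)"

definition totally_complex :: "complex set \<Rightarrow> bool" where
  "totally_complex l \<longleftrightarrow> (\<forall>\<sigma>. embedding l \<sigma> \<longrightarrow> (\<exists>x\<in>l. \<sigma> x \<notin> \<real>))"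

text \<open>Automorphism group Aut(l/Q); automorphisms are normalised to be the identity
outside l, so that the identity of the group is id and composition is (o).\<close>
definition Gal :: "complex set \<Rightarrow> (complex \<Rightarrow> complex) set" where
  "Gal l = {\<sigma>. embedding l \<sigma> \<and> bij_betw \<sigma> l l \<and> (\<forall>x. x \<notin> l \<longrightarrow> \<sigma> x = x)}"

text \<open>Archimedean places, represented by their normalised absolute value
  \<parallel>.\<parallel>_w = |sigma(.)| (restricted to l) for an embedding sigma.\<close>
definition arch_places :: "complex set \<Rightarrow> (complex \<Rightarrow> real) set" where
  "arch_places l = {(\<lambda>x. if x \<in> l then cmod (\<sigma> x) else 0) | \<sigma>. embedding l \<sigma>}"

definition local_degree :: "complex set \<Rightarrow> (complex \<Rightarrow> real) \<Rightarrow> nat" where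
  "local_degree l w = (if \<exists>\<sigma>. embedding l \<sigma> \<and> \<sigma> ` l \<subseteq> \<real> \<and>
        w = (\<lambda>x. if x \<in> l then cmod (\<sigma> x) else 0) then 1 else 2)"

definition abs_place :: "complex set \<Rightarrow> (complex \<Rightarrow> real) \<Rightarrow> complex \<Rightarrow> real" where
  "abs_place l w x = w x powr (real (local_degree l w) / real (field_degree l))"

text \<open>Action of G on places: \<parallel>sigma^-1 gamma\<parallel>_w = \<parallel>gamma\<parallel>_{sigma w}.\<close>
definition place_act :: "(complex \<Rightarrow> complex) \<Rightarrow> (complex \<Rightarrow> real) \<Rightarrow> (complex \<Rightarrow> real)" where
  "place_act \<sigma> w = w \<circ> inv \<sigma>"

definition stabilizer :: "complex set \<Rightarrow> (complex \<Rightarrow> real) \<Rightarrow> (complex \<Rightarrow> complex) set" where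
  "stabilizer l w = {\<sigma> \<in> Gal l. place_act \<sigma> w = w}"

definition unit_Ol :: "complex set \<Rightarrow> complex \<Rightarrow> bool" where
  "unit_Ol l x \<longleftrightarrow> x \<in> l \<and> x \<noteq> 0 \<and> algebraic_int x \<and> algebraic_int (inverse x)"

text \<open>Special Minkowski unit w.r.t. wh (on representatives of F_l = O_l^x / torsion;
  log|.|_w is well defined on F_l).\<close>
definition special_minkowski :: "complex set \<Rightarrow> (complex \<Rightarrow> real) \<Rightarrow> complex \<Rightarrow> bool" where
  "special_minkowski l wh \<beta> \<longleftrightarrow> unit_Ol l \<beta> \<and>
     (\<forall>w \<in> arch_places l. w \<noteq> wh \<longrightarrow> ln (abs_place l w \<beta>) < 0)"

end

theory Submission
  imports Defs "Jordan_Normal_Form.Char_Poly" "HOL-Computational_Algebra.Fundamental_Theorem_Algebra"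
begin

unbundle no m_inv_syntax


definition Kpoly :: "complex set \<Rightarrow> complex poly \<Rightarrow> bool" where
  "Kpoly K p \<longleftrightarrow> (\<forall>i. coeff p i \<in> K)"

context fixes K :: "complex set" assumes sf: "subfield_C K"
begin

lemma sf_0[simp]: "0 \<in> K" and sf_1[simp]: "1 \<in> K"
  using sf unfolding subfield_C_def by auto

lemma sf_add[intro]: "x \<in> K \<Longrightarrow> y \<in> K \<Longrightarrow> x + y \<in> K"
  and sf_mult[intro]: "x \<in> K \<Longrightarrow> y \<in> K \<Longrightarrow> x * y \<in> K"
  and sf_uminus[intro]: "x \<in> K \<Longrightarrow> - x \<in> K"
  and sf_inverse[intro]: "x \<in> K \<Longrightarrow> inverse x \<in> K"
  using sf unfolding subfield_C_def by auto

lemma sf_diff[intro]: "x \<in> K \<Longrightarrow> y \<in> K \<Longrightarrow> x - y \<in> K"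
  using sf_add[of x "-y"] sf_uminus[of y] by simp

lemma sf_divide[intro]: "x \<in> K \<Longrightarrow> y \<in> K \<Longrightarrow> x / y \<in> K"
  by (simp add: divide_inverse sf_inverse sf_mult)

lemma sf_power[intro]: "x \<in> K \<Longrightarrow> x ^ n \<in> K"
  by (induction n) auto

lemma sf_sum[intro]: "(\<And>i. i \<in> A \<Longrightarrow> f i \<in> K) \<Longrightarrow> sum f A \<in> K"
  by (induction A rule: infinite_finite_induct) auto

lemma sf_prod[intro]: "(\<And>i. i \<in> A \<Longrightarrow> f i \<in> K) \<Longrightarrow> prod f A \<in> K"
  by (induction A rule: infinite_finite_induct) auto

lemma sf_of_nat[intro]: "of_nat n \<in> K"
  by (induction n) auto

lemma sf_of_int[intro]: "of_int k \<in> K"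
proof (cases "k \<ge> 0")
  case True thus ?thesis using sf_of_nat[of "nat k"] by simp
next
  case False thus ?thesis using sf_uminus[OF sf_of_nat[of "nat (-k)"]] by simp
qed

lemma sf_Rats: "\<rat> \<subseteq> K"
proof
  fix x :: complex assume "x \<in> \<rat>"
  then obtain a b where "x = of_int a / of_int b" by (auto elim: Rats_cases')
  thus "x \<in> K" by auto
qed

lemma sf_poly[intro]: "Kpoly K p \<Longrightarrow> x \<in> K \<Longrightarrow> poly p x \<in> K"
  unfolding Kpoly_def by (auto simp: poly_altdef)

end

lemma Kpoly_add[intro]: "subfield_C K \<Longrightarrow> Kpoly K p \<Longrightarrow> Kpoly K q \<Longrightarrow> Kpoly K (p + q)"
  by (auto simp: Kpoly_def)
lemma Kpoly_diff[intro]: "subfield_C K \<Longrightarrow> Kpoly K p \<Longrightarrow> Kpoly K q \<Longrightarrow> Kpoly K (p - q)"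
  by (auto simp: Kpoly_def)
lemma Kpoly_uminus[intro]: "subfield_C K \<Longrightarrow> Kpoly K p \<Longrightarrow> Kpoly K (- p)"
  by (auto simp: Kpoly_def)
lemma Kpoly_mult[intro]: "subfield_C K \<Longrightarrow> Kpoly K p \<Longrightarrow> Kpoly K q \<Longrightarrow> Kpoly K (p * q)"
  by (auto simp: Kpoly_def coeff_mult)
lemma Kpoly_smult[intro]: "subfield_C K \<Longrightarrow> a \<in> K \<Longrightarrow> Kpoly K p \<Longrightarrow> Kpoly K (Polynomial.smult a p)"
  by (auto simp: Kpoly_def)
lemma Kpoly_monom[intro]: "subfield_C K \<Longrightarrow> a \<in> K \<Longrightarrow> Kpoly K (monom a n)"
  by (auto simp: Kpoly_def coeff_monom)
lemma Kpoly_const[intro]: "subfield_C K \<Longrightarrow> a \<in> K \<Longrightarrow> Kpoly K [:a:]"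
  by (auto simp: Kpoly_def coeff_pCons split: nat.splits)
lemma Kpoly_pCons[simp]: "subfield_C K \<Longrightarrow> Kpoly K (pCons a p) \<longleftrightarrow> a \<in> K \<and> Kpoly K p"
  by (auto simp: Kpoly_def coeff_pCons split: nat.splits)
lemma Kpoly_0[intro]: "subfield_C K \<Longrightarrow> Kpoly K 0"
  by (auto simp: Kpoly_def)
lemma Kpoly_1[intro]: "subfield_C K \<Longrightarrow> Kpoly K 1"
  by (auto simp: Kpoly_def coeff_1)
lemma Kpoly_X[intro]: "subfield_C K \<Longrightarrow> Kpoly K [:0,1:]"
  by (auto simp: Kpoly_def coeff_pCons split: nat.splits)
lemma Kpoly_pderiv[intro]: "subfield_C K \<Longrightarrow> Kpoly K p \<Longrightarrow> Kpoly K (pderiv p)"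
  by (auto simp: Kpoly_def coeff_pderiv intro!: sf_mult sf_add sf_of_nat)
lemma Kpoly_mono: "Kpoly K p \<Longrightarrow> K \<subseteq> L \<Longrightarrow> Kpoly L p"
  by (auto simp: Kpoly_def)

context fixes K :: "complex set" and \<phi> :: "complex \<Rightarrow> complex"
  assumes sf: "subfield_C K" and emb: "embedding K \<phi>"
begin

lemmas sfK[simp] = sf_add[OF sf] sf_mult[OF sf] sf_uminus[OF sf] sf_inverse[OF sf] sf_diff[OF sf]
  sf_divide[OF sf] sf_power[OF sf] sf_of_nat[OF sf] sf_of_int[OF sf] sf_0[OF sf] sf_1[OF sf] sf_poly[OF sf]

lemma emb_1[simp]: "\<phi> 1 = 1" using emb by (simp add: embedding_def)
lemma emb_add: "x \<in> K \<Longrightarrow> y \<in> K \<Longrightarrow> \<phi> (x + y) = \<phi> x + \<phi> y"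
  and emb_mult: "x \<in> K \<Longrightarrow> y \<in> K \<Longrightarrow> \<phi> (x * y) = \<phi> x * \<phi> y"
  using emb by (auto simp: embedding_def)

lemma emb_0[simp]: "\<phi> 0 = 0"
  using emb_add[of 0 0] sf by simp

lemma emb_uminus: "x \<in> K \<Longrightarrow> \<phi> (- x) = - \<phi> x"
  using emb_add[of x "-x"] by (simp add: eq_neg_iff_add_eq_0 add.commute)

lemma emb_diff: "x \<in> K \<Longrightarrow> y \<in> K \<Longrightarrow> \<phi> (x - y) = \<phi> x - \<phi> y"
  using emb_add[of x "-y"] emb_uminus[of y] sf by auto

lemma emb_inverse: "x \<in> K \<Longrightarrow> \<phi> (inverse x) = inverse (\<phi> x)"
proof (cases "x = 0")
  case False
  assume x: "x \<in> K"
  have "\<phi> x * \<phi> (inverse x) = 1" using emb_mult[of x "inverse x"] x sf False by auto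
  thus ?thesis by (metis inverse_unique)
qed simp

lemma emb_nonzero: "x \<in> K \<Longrightarrow> x \<noteq> 0 \<Longrightarrow> \<phi> x \<noteq> 0"
  using emb_mult[of x "inverse x"] sf by force

lemma emb_inj: "inj_on \<phi> K"
proof (rule inj_onI)
  fix x y assume "x \<in> K" "y \<in> K" "\<phi> x = \<phi> y"
  hence "\<phi> (x - y) = 0" using emb_diff sf by auto
  thus "x = y" using emb_nonzero[of "x - y"] \<open>x \<in> K\<close> \<open>y \<in> K\<close> sf by auto
qed

lemma emb_power: "x \<in> K \<Longrightarrow> \<phi> (x ^ n) = \<phi> x ^ n"
  by (induction n) (auto simp: emb_mult sf)

lemma emb_sum: "(\<And>i. i \<in> A \<Longrightarrow> f i \<in> K) \<Longrightarrow> \<phi> (sum f A) = (\<Sum>i\<in>A. \<phi> (f i))"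
proof (induction A rule: infinite_finite_induct)
  case (insert x F)
  have "sum f F \<in> K" by (rule sf_sum[OF sf]) (use insert in auto)
  thus ?case using insert by (auto simp: emb_add)
qed auto

lemma emb_prod: "(\<And>i. i \<in> A \<Longrightarrow> f i \<in> K) \<Longrightarrow> \<phi> (prod f A) = (\<Prod>i\<in>A. \<phi> (f i))"
proof (induction A rule: infinite_finite_induct)
  case (insert x F)
  have "prod f F \<in> K" by (rule sf_prod[OF sf]) (use insert in auto)
  thus ?case using insert by (auto simp: emb_mult)
qed auto

lemma emb_of_nat[simp]: "\<phi> (of_nat n) = of_nat n"
  by (induction n) (auto simp: emb_add)

lemma emb_of_int[simp]: "\<phi> (of_int k) = of_int k"
proof (cases "k \<ge> 0")
  case True thus ?thesis using emb_of_nat[of "nat k"] by simp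
next
  case False
  hence "of_int k = - (of_nat (nat (-k)) :: complex)" by simp
  thus ?thesis using emb_uminus[of "of_nat (nat (-k))"] emb_of_nat[of "nat (-k)"] by simp
qed

lemma emb_Rats: "x \<in> \<rat> \<Longrightarrow> \<phi> x = x"
proof -
  assume "x \<in> \<rat>"
  then obtain a b where x: "x = of_int a / of_int b" by (auto elim: Rats_cases')
  show ?thesis unfolding x divide_inverse
    using sf by (subst emb_mult) (auto simp: emb_inverse)
qed

lemma emb_poly: "Kpoly K p \<Longrightarrow> x \<in> K \<Longrightarrow> \<phi> (poly p x) = poly (map_poly \<phi> p) (\<phi> x)"
proof (induction p rule: pCons_induct)
  case (pCons a p)
  thus ?case using sf by (auto simp: map_poly_pCons emb_add emb_mult)
qed simp

lemma emb_poly_Rats: "Kpoly \<rat> p \<Longrightarrow> x \<in> K \<Longrightarrow> \<phi> (poly p x) = poly p (\<phi> x)"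
proof -
  assume p: "Kpoly \<rat> p" and x: "x \<in> K"
  have "Kpoly K p" using p sf_Rats[OF sf] by (rule Kpoly_mono)
  moreover have "map_poly \<phi> p = p"
    using p by (intro poly_eqI) (auto simp: coeff_map_poly Kpoly_def emb_Rats)
  ultimately show ?thesis using emb_poly x by simp
qed

end



interpretation rs: vector_space rat_scale
  by unfold_locales (auto simp: rat_scale_def algebra_simps of_rat_add of_rat_mult)

lemma nf_sf: "number_field l \<Longrightarrow> subfield_C l"
  by (simp add: number_field_def)

lemma nf_alg:
  assumes nf: "number_field l" and x: "x \<in> l"
  shows "\<exists>p. p \<noteq> 0 \<and> Kpoly \<rat> p \<and> poly p x = 0"
proof -
  have sf: "subfield_C l" using nf by (simp add: number_field_def)
  obtain B where B: "finite B" "B \<subseteq> l" "l = rs.span B"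
    using nf unfolding number_field_def by blast
  define n where "n = card B"
  show ?thesis
  proof (cases "inj_on (\<lambda>i. x ^ i) {..n}")
    case False
    then obtain i j where ij: "i \<le> n" "j \<le> n" "i \<noteq> j" "x ^ i = x ^ j"
      unfolding inj_on_def by auto
    define p :: "complex poly" where "p = monom 1 i - monom 1 j"
    have "coeff p i = 1" using ij by (simp add: p_def coeff_monom)
    hence "p \<noteq> 0" by auto
    moreover have "Kpoly \<rat> p" by (auto simp: Kpoly_def p_def coeff_monom)
    moreover have "poly p x = 0" using ij by (simp add: p_def poly_monom)
    ultimately show ?thesis by blast
  next
    case True
    define S where "S = (\<lambda>i. x ^ i) ` {..n}"
    have cardS: "card S = n + 1" using True by (simp add: S_def card_image)
    have "S \<subseteq> l" using x sf by (auto simp: S_def)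
    hence Ssp: "S \<subseteq> rs.span B" using B by simp
    have "rs.dependent S"
    proof (rule ccontr)
      assume "rs.independent S"
      from rs.independent_span_bound[OF B(1) _ Ssp] \<open>\<not> rs.dependent S\<close> cardS n_def show False by simp
    qed
    then obtain t u where tu: "finite t" "t \<subseteq> S" "(\<Sum>v\<in>t. rat_scale (u v) v) = 0"
      "\<exists>v\<in>t. u v \<noteq> 0"
      unfolding rs.dependent_explicit by blast
    define c where "c = (\<lambda>i. if x ^ i \<in> t then of_rat (u (x ^ i)) else (0::complex))"
    define p where "p = (\<Sum>i\<le>n. monom (c i) i)"
    have coeffp: "coeff p j = (if j \<le> n then c j else 0)" for j
      by (simp add: p_def coeff_sum coeff_monom)
    have "Kpoly \<rat> p" by (auto simp: Kpoly_def coeffp c_def)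
    moreover have "p \<noteq> 0"
    proof -
      obtain v where v: "v \<in> t" "u v \<noteq> 0" using tu by blast
      then obtain j where j: "j \<le> n" "v = x ^ j" using tu(2) by (auto simp: S_def)
      have "coeff p j \<noteq> 0" using v j by (simp add: coeffp c_def)
      thus ?thesis by auto
    qed
    moreover have "poly p x = 0"
    proof -
      have "poly p x = (\<Sum>i\<le>n. c i * x ^ i)" by (simp add: p_def poly_sum poly_monom)
      also have "\<dots> = (\<Sum>v\<in>S. if v \<in> t then of_rat (u v) * v else 0)"
        unfolding S_def by (subst sum.reindex[OF True]) (auto simp: c_def intro!: sum.cong)
      also have "\<dots> = (\<Sum>v\<in>t. of_rat (u v) * v)"
        using tu(1,2) by (simp add: sum.If_cases Int_absorb1 S_def)
      also have "\<dots> = 0" using tu(3) by (simp add: rat_scale_def)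
      finally show ?thesis .
    qed
    ultimately show ?thesis by blast
  qed
qed




lemma alg_int_eigen:
  fixes A :: "int mat" and v :: "complex vec"
  assumes A: "A \<in> carrier_mat n n" and v: "v \<in> carrier_vec n" "v \<noteq> 0\<^sub>v n"
    and Av: "map_mat of_int A *\<^sub>v v = z \<cdot>\<^sub>v v"
  shows "algebraic_int z"
proof -
  let ?B = "map_mat (of_int :: int \<Rightarrow> complex) A"
  have B: "?B \<in> carrier_mat n n" using A by simp
  have "eigenvector ?B v z" unfolding eigenvector_def using v Av B by auto
  hence "eigenvalue ?B z" unfolding eigenvalue_def by auto
  hence "poly (char_poly ?B) z = 0" using eigenvalue_root_char_poly[OF B] by simp
  moreover have "char_poly ?B = map_poly of_int (char_poly A)" by (rule of_int_hom.char_poly_hom[OF A])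
  ultimately have "poly (map_poly of_int (char_poly A)) z = 0" by simp
  moreover have "lead_coeff (char_poly A) = 1" using degree_monic_char_poly[OF A] by simp
  ultimately show ?thesis unfolding algebraic_int_altdef_ipoly by blast
qed

lemma sum_divmod:
  fixes a b :: nat shows "(\<Sum>s<a*b. g (s div b) (s mod b)) = (\<Sum>k<a. \<Sum>l<b. g k l :: 'c :: comm_monoid_add)"
proof (induction a)
  case (Suc a)
  have "(\<Sum>s<Suc a * b. g (s div b) (s mod b)) =
        (\<Sum>s\<in>{0..<a*b}. g (s div b) (s mod b)) + (\<Sum>s\<in>{a*b..<a*b+b}. g (s div b) (s mod b))"
    by (simp add: lessThan_atLeast0 sum.atLeastLessThan_concat add.commute)
  also have "(\<Sum>s\<in>{a*b..<a*b+b}. g (s div b) (s mod b)) = (\<Sum>l<b. g a l)"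
  proof -
    have "(\<Sum>s\<in>{a*b..<a*b+b}. g (s div b) (s mod b)) = (\<Sum>l\<in>{0..<b}. g ((a*b+l) div b) ((a*b+l) mod b))"
      by (subst sum.atLeastLessThan_shift_0) (simp add: comp_def)
    also have "\<dots> = (\<Sum>l\<in>{0..<b}. g a l)"
      by (intro sum.cong) auto
    finally show ?thesis by (simp add: lessThan_atLeast0)
  qed
  finally show ?case using Suc by (simp add: lessThan_atLeast0)
qed simp

lemma aux_of_int_if: "(of_int (if k = j then 1 else 0) :: complex) * x^k = (if k = j then x^k else 0)"
  by simp

lemma companion_row:
  fixes c :: "nat \<Rightarrow> int" and x :: complex
  assumes xn: "x ^ n = (\<Sum>k<n. of_int (- c k) * x^k)" and i: "i < n"
  shows "(\<Sum>k<n. of_int (if Suc i < n then (if k = Suc i then 1 else 0) else - c k) * x^k) = x * x^i"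
proof (cases "Suc i < n")
  case True
  have "(\<Sum>k<n. of_int (if Suc i < n then (if k = Suc i then 1 else 0) else - c k) * x^k)
      = (\<Sum>k<n. if k = Suc i then x ^ k else 0)"
    by (simp only: True if_True aux_of_int_if)
  also have "\<dots> = x ^ Suc i" using True by (simp add: sum.delta)
  finally show ?thesis by simp
next
  case False
  hence "Suc i = n" using i by linarith
  thus ?thesis using False xn by auto
qed

lemma monic_root:
  fixes p :: "int poly" and x :: complex
  assumes p: "lead_coeff p = 1" "poly (map_poly of_int p) x = 0" and a: "a = degree p"
  shows "x ^ a = (\<Sum>k<a. of_int (- coeff p k) * x^k)"
proof -
  have dm: "degree (map_poly (of_int :: int \<Rightarrow> complex) p) = a"
    unfolding a by (rule degree_map_poly) simp
  have cm: "coeff (map_poly (of_int :: int \<Rightarrow> complex) p) k = of_int (coeff p k)" for k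
    by (rule coeff_map_poly) simp
  have "0 = (\<Sum>k\<le>a. of_int (coeff p k) * x ^ k)"
    using p(2) unfolding poly_altdef dm cm by (rule sym)
  also have "\<dots> = (\<Sum>k<a. of_int (coeff p k) * x ^ k) + of_int (coeff p a) * x ^ a"
    by (subst lessThan_Suc_atMost[symmetric], subst sum.lessThan_Suc, rule refl)
  also have "coeff p a = 1" using p(1) unfolding a .
  finally have "x ^ a = - (\<Sum>k<a. of_int (coeff p k) * x ^ k)"
    by (simp add: eq_neg_iff_add_eq_0 add.commute)
  also have "\<dots> = (\<Sum>k<a. of_int (- coeff p k) * x ^ k)"
    by (simp add: sum_negf)
  finally show ?thesis .
qed

lemma algebraic_int_mult:
  fixes x y :: complex
  assumes x: "algebraic_int x" and y: "algebraic_int y"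
  shows "algebraic_int (x * y)"
proof -
  obtain p where p: "poly (map_poly of_int p) x = 0" "lead_coeff p = 1"
    using x unfolding algebraic_int_altdef_ipoly by blast
  obtain q where q: "poly (map_poly of_int q) y = 0" "lead_coeff q = 1"
    using y unfolding algebraic_int_altdef_ipoly by blast
  define a where "a = degree p"
  define b where "b = degree q"
  have a0: "a > 0"
  proof (rule ccontr)
    assume "\<not> a > 0"
    hence "p = [:1:]" using p(2) unfolding a_def by (metis degree_0_id gr0I)
    thus False using p(1) by simp
  qed
  have b0: "b > 0"
  proof (rule ccontr)
    assume "\<not> b > 0"
    hence "q = [:1:]" using q(2) unfolding b_def by (metis degree_0_id gr0I)
    thus False using q(1) by simp
  qed
  define cp where "cp = coeff p"
  define cq where "cq = coeff q"
  have xa: "x ^ a = (\<Sum>k<a. of_int (- cp k) * x^k)"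
    unfolding cp_def by (rule monic_root[OF p(2) p(1) a_def])
  have yb: "y ^ b = (\<Sum>k<b. of_int (- cq k) * y^k)"
    unfolding cq_def by (rule monic_root[OF q(2) q(1) b_def])
  define Cx where "Cx = (\<lambda>i k. if Suc i < a then (if k = Suc i then 1 else 0) else - cp k)"
  define Cy where "Cy = (\<lambda>i k. if Suc i < b then (if k = Suc i then 1 else 0) else - cq k)"
  have Cx: "i < a \<Longrightarrow> (\<Sum>k<a. of_int (Cx i k) * x^k) = x * x^i" for i
    unfolding Cx_def by (rule companion_row[OF xa])
  have Cy: "j < b \<Longrightarrow> (\<Sum>l<b. of_int (Cy j l) * y^l) = y * y^j" for j
    unfolding Cy_def by (rule companion_row[OF yb])
  define n where "n = a * b"
  define A :: "int mat" where "A = Matrix.mat n n (\<lambda>(r,s). Cx (r div b) (s div b) * Cy (r mod b) (s mod b))"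
  define v :: "complex vec" where "v = Matrix.vec n (\<lambda>s. x^(s div b) * y^(s mod b))"
  have n0: "n > 0" using a0 b0 by (simp add: n_def)
  have A: "A \<in> carrier_mat n n" by (simp add: A_def)
  have v: "v \<in> carrier_vec n" by (simp add: v_def)
  have v0: "v \<noteq> 0\<^sub>v n"
  proof
    assume "v = 0\<^sub>v n"
    hence "v $ 0 = 0" using n0 by simp
    thus False using n0 by (simp add: v_def)
  qed
  have "map_mat of_int A *\<^sub>v v = (x * y) \<cdot>\<^sub>v v"
  proof (rule eq_vecI)
    fix r assume "r < dim_vec ((x * y) \<cdot>\<^sub>v v)"
    hence r: "r < n" by (simp add: v_def)
    have rb: "r div b < a" "r mod b < b" using r b0 by (auto simp: n_def less_mult_imp_div_less)
    have "(map_mat of_int A *\<^sub>v v) $ r = (\<Sum>s<n. of_int (Cx (r div b) (s div b) * Cy (r mod b) (s mod b)) *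
             (x^(s div b) * y^(s mod b)))"
      using r A by (simp add: A_def v_def scalar_prod_def lessThan_atLeast0)
    also have "\<dots> = (\<Sum>k<a. \<Sum>l<b. of_int (Cx (r div b) k * Cy (r mod b) l) * (x^k * y^l))"
      unfolding n_def by (rule sum_divmod)
    also have "\<dots> = (\<Sum>k<a. of_int (Cx (r div b) k) * x^k) * (\<Sum>l<b. of_int (Cy (r mod b) l) * y^l)"
      by (simp add: sum_product mult_ac)
    also have "\<dots> = (x * y) * v $ r" using Cx[OF rb(1)] Cy[OF rb(2)] r by (simp add: v_def mult_ac)
    finally show "(map_mat of_int A *\<^sub>v v) $ r = ((x * y) \<cdot>\<^sub>v v) $ r" using r by (simp add: v_def)
  qed (simp add: A_def v_def)
  from alg_int_eigen[OF A v v0 this] show ?thesis .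
qed




lemma fta_root: fixes p :: "complex poly" assumes "degree p > 0" shows "\<exists>z. poly p z = 0"
  using fundamental_theorem_of_algebra[of p] constant_degree[of p] assms by auto

lemma sf_Rats_self: "subfield_C \<rat>"
  by (auto simp: subfield_C_def)

lemma Kpoly_Rats_sf: "subfield_C K \<Longrightarrow> Kpoly \<rat> p \<Longrightarrow> Kpoly K p"
  using sf_Rats Kpoly_mono by blast

lemma minpoly_ex:
  assumes nf: "number_field l" and sf: "subfield_C K" and Kl: "K \<subseteq> l" and z: "z \<in> l"
  shows "\<exists>m. Kpoly K m \<and> lead_coeff m = 1 \<and> poly m z = 0 \<and>
             (\<forall>p. Kpoly K p \<and> p \<noteq> 0 \<and> poly p z = 0 \<longrightarrow> degree m \<le> degree p)"
proof -
  obtain p0 where p0: "p0 \<noteq> 0" "Kpoly \<rat> p0" "poly p0 z = 0" using nf_alg[OF nf z] by blast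
  define P where "P = (\<lambda>n. \<exists>p. Kpoly K p \<and> p \<noteq> 0 \<and> poly p z = 0 \<and> degree p = n)"
  have "P (degree p0)" unfolding P_def using p0 Kpoly_Rats_sf[OF sf] by blast
  hence "P (LEAST n. P n)" by (rule LeastI)
  then obtain p where p: "Kpoly K p" "p \<noteq> 0" "poly p z = 0" "degree p = (LEAST n. P n)"
    unfolding P_def by blast
  define m where "m = Polynomial.smult (inverse (lead_coeff p)) p"
  have lc: "lead_coeff p \<noteq> 0" "lead_coeff p \<in> K" using p(1,2) by (auto simp: Kpoly_def)
  have "Kpoly K m" unfolding m_def using lc p(1) sf by (intro Kpoly_smult sf_inverse) auto
  moreover have "lead_coeff m = 1" unfolding m_def lead_coeff_smult using lc by simp
  moreover have "poly m z = 0" unfolding m_def using p by simp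
  moreover have "degree m \<le> degree q" if "Kpoly K q" "q \<noteq> 0" "poly q z = 0" for q
  proof -
    have "P (degree q)" unfolding P_def using that by blast
    hence "(LEAST n. P n) \<le> degree q" by (rule Least_le)
    thus ?thesis unfolding m_def using lc p by simp
  qed
  ultimately show ?thesis by blast
qed

lemma Kdiv:
  assumes sf: "subfield_C K" and m: "Kpoly K m" "lead_coeff m = 1"
  shows "Kpoly K p \<Longrightarrow> \<exists>s r. Kpoly K s \<and> Kpoly K r \<and> p = s * m + r \<and> (r = 0 \<or> degree r < degree m)"
proof (induction "degree p" arbitrary: p rule: less_induct)
  case less
  show ?case
  proof (cases "p = 0 \<or> degree p < degree m")
    case True
    thus ?thesis using less.prems sf by (intro exI[of _ 0] exI[of _ p]) auto
  next
    case False
    hence p0: "p \<noteq> 0" and dm: "degree m \<le> degree p" by auto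
    define d where "d = degree p - degree m"
    define c where "c = lead_coeff p"
    have cK: "c \<in> K" using less.prems by (auto simp: Kpoly_def c_def)
    define p' where "p' = p - monom c d * m"
    have Kp': "Kpoly K p'" unfolding p'_def using less.prems cK m sf by blast
    have "degree (monom c d * m) \<le> degree p"
      using degree_mult_le[of "monom c d" m] degree_monom_le[of c d] dm unfolding d_def by linarith
    hence dp': "degree p' \<le> degree p" unfolding p'_def by (meson degree_diff_le le_refl)
    have "coeff (monom c d * m) (degree p) = c"
      using dm m(2) by (simp add: coeff_monom_mult d_def)
    hence cp': "coeff p' (degree p) = 0" unfolding p'_def c_def by simp
    show ?thesis
    proof (cases "p' = 0")
      case True
      hence "p = monom c d * m + 0" unfolding p'_def by simp
      thus ?thesis using cK sf by (intro exI[of _ "monom c d"] exI[of _ 0]) auto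
    next
      case False
      have "degree p' \<noteq> degree p" using False cp' by (metis leading_coeff_0_iff)
      hence "degree p' < degree p" using dp' by simp
      from less.hyps[OF this Kp'] obtain s r where sr: "Kpoly K s" "Kpoly K r" "p' = s * m + r"
        "r = 0 \<or> degree r < degree m" by blast
      have "p = (s + monom c d) * m + r" using sr(3) unfolding p'_def by (simp add: algebra_simps)
      thus ?thesis using sr cK sf by (intro exI[of _ "s + monom c d"] exI[of _ r]) auto
    qed
  qed
qed

definition is_minpoly where
  "is_minpoly K z m \<longleftrightarrow> Kpoly K m \<and> lead_coeff m = 1 \<and> poly m z = 0 \<and>
             (\<forall>p. Kpoly K p \<and> p \<noteq> 0 \<and> poly p z = 0 \<longrightarrow> degree m \<le> degree p)"

lemma minpoly_dvd:
  assumes sf: "subfield_C K" and m: "is_minpoly K z m" and p: "Kpoly K p" "poly p z = 0"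
  shows "\<exists>s. Kpoly K s \<and> p = s * m"
proof -
  from m have mK: "Kpoly K m" "lead_coeff m = 1" "poly m z = 0" by (auto simp: is_minpoly_def)
  obtain s r where sr: "Kpoly K s" "Kpoly K r" "p = s * m + r" "r = 0 \<or> degree r < degree m"
    using Kdiv[OF sf mK(1,2) p(1)] by blast
  have "poly r z = 0" using sr(3) p(2) mK(3) by (metis add_0 mult_zero_right poly_add poly_mult)
  have "r = 0"
  proof (rule ccontr)
    assume "r \<noteq> 0"
    hence "degree m \<le> degree r" using m sr(2) \<open>poly r z = 0\<close> by (auto simp: is_minpoly_def)
    thus False using sr(4) \<open>r \<noteq> 0\<close> by simp
  qed
  thus ?thesis using sr by auto
qed

definition subring_C :: "complex set \<Rightarrow> bool" where
  "subring_C R \<longleftrightarrow> \<rat> \<subseteq> R \<and> (\<forall>x\<in>R. \<forall>y\<in>R. x + y \<in> R \<and> x * y \<in> R)"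

lemma subring_poly: "subring_C R \<Longrightarrow> Kpoly \<rat> p \<Longrightarrow> x \<in> R \<Longrightarrow> poly p x \<in> R"
proof (induction p rule: pCons_induct)
  case 0 thus ?case by (auto simp: subring_C_def)
next
  case (pCons a p)
  have "a \<in> R" "Kpoly \<rat> p" using pCons.prems sf_Rats_self by (auto simp: subring_C_def)
  thus ?case using pCons by (auto simp: subring_C_def)
qed

lemma strip_zero_root:
  assumes "x \<noteq> 0"
  shows "p \<noteq> 0 \<Longrightarrow> Kpoly \<rat> p \<Longrightarrow> poly p x = 0 \<Longrightarrow> \<exists>q. Kpoly \<rat> q \<and> poly q x = 0 \<and> coeff q 0 \<noteq> 0"
proof (induction p rule: pCons_induct)
  case (pCons a p)
  show ?case
  proof (cases "a = 0")
    case False thus ?thesis using pCons.prems by (intro exI[of _ "pCons a p"]) auto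
  next
    case True
    have "p \<noteq> 0" using pCons.prems True by auto
    moreover have "Kpoly \<rat> p" using pCons.prems sf_Rats_self by simp
    moreover have "poly p x = 0" using pCons.prems True assms by simp
    ultimately show ?thesis using pCons.IH by blast
  qed
qed simp

lemma subring_inverse:
  assumes nf: "number_field l" and R: "subring_C R" "R \<subseteq> l" and x: "x \<in> R"
  shows "inverse x \<in> R"
proof (cases "x = 0")
  case True thus ?thesis using R by (auto simp: subring_C_def)
next
  case False
  obtain p where p: "p \<noteq> 0" "Kpoly \<rat> p" "poly p x = 0" using nf_alg[OF nf] x R by blast
  obtain q where q: "Kpoly \<rat> q" "poly q x = 0" "coeff q 0 \<noteq> 0"
    using strip_zero_root[OF False p] by blast
  obtain c q1 where qc: "q = pCons c q1" by (cases q) auto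
  have c: "c \<noteq> 0" "c \<in> \<rat>" using q qc by (auto simp: Kpoly_def dest: spec[of _ 0])
  have q1: "Kpoly \<rat> q1" using q(1) qc sf_Rats_self by simp
  have "c + x * poly q1 x = 0" using q(2) qc by simp
  hence "inverse x = poly q1 x * (- inverse c)" using c False by (simp add: field_simps add_eq_0_iff2)
  moreover have "poly q1 x \<in> R" using subring_poly[OF R(1) q1 x] .
  moreover have "- inverse c \<in> R" using c R(1) by (auto simp: subring_C_def)
  ultimately show ?thesis using R(1) unfolding subring_C_def by (metis (no_types))
qed




definition adj :: "complex set \<Rightarrow> complex \<Rightarrow> complex set" where
  "adj K z = {poly p z | p. Kpoly K p}"

context fixes K :: "complex set" and \<phi> :: "complex \<Rightarrow> complex"
  assumes sf: "subfield_C K" and emb: "embedding K \<phi>"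
begin

lemmas sfK' = sf_add[OF sf] sf_mult[OF sf] sf_uminus[OF sf] sf_inverse[OF sf] sf_diff[OF sf]
  sf_0[OF sf] sf_1[OF sf]
lemmas embK = emb_0[OF sf emb] emb_1[OF sf emb]

lemma map_add: "Kpoly K p \<Longrightarrow> Kpoly K q \<Longrightarrow> map_poly \<phi> (p + q) = map_poly \<phi> p + map_poly \<phi> q"
  by (intro poly_eqI) (auto simp: coeff_map_poly embK Kpoly_def emb_add[OF sf emb])

lemma map_diff: "Kpoly K p \<Longrightarrow> Kpoly K q \<Longrightarrow> map_poly \<phi> (p - q) = map_poly \<phi> p - map_poly \<phi> q"
  by (intro poly_eqI) (auto simp: coeff_map_poly embK Kpoly_def emb_diff[OF sf emb])

lemma map_mult: "Kpoly K p \<Longrightarrow> Kpoly K q \<Longrightarrow> map_poly \<phi> (p * q) = map_poly \<phi> p * map_poly \<phi> q"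
proof (intro poly_eqI)
  fix n assume p: "Kpoly K p" and q: "Kpoly K q"
  have "coeff (map_poly \<phi> (p * q)) n = \<phi> (\<Sum>i\<le>n. coeff p i * coeff q (n - i))"
    by (simp add: coeff_map_poly embK coeff_mult)
  also have "\<dots> = (\<Sum>i\<le>n. \<phi> (coeff p i) * \<phi> (coeff q (n - i)))"
    using p q by (subst emb_sum[OF sf emb]) (auto simp: Kpoly_def emb_mult[OF sf emb] sfK')
  also have "\<dots> = coeff (map_poly \<phi> p * map_poly \<phi> q) n"
    by (simp add: coeff_map_poly embK coeff_mult)
  finally show "coeff (map_poly \<phi> (p * q)) n = coeff (map_poly \<phi> p * map_poly \<phi> q) n" .
qed

lemma map_const: "map_poly \<phi> [:a:] = [:\<phi> a:]"
  by (intro poly_eqI) (auto simp: coeff_map_poly embK coeff_pCons split: nat.splits)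

lemma map_X: "map_poly \<phi> [:0, 1:] = [:0, 1:]"
  by (intro poly_eqI) (auto simp: coeff_map_poly embK coeff_pCons split: nat.splits)

end

context fixes l :: "complex set" assumes nf: "number_field l"
begin

lemma sfl: "subfield_C l" using nf by (simp add: number_field_def)

lemma adj_subring: assumes sf: "subfield_C K" shows "subring_C (adj K z)"
proof -
  have 1: "x \<in> adj K z" if "x \<in> \<rat>" for x
    unfolding adj_def using sf_Rats[OF sf] that sf by (intro CollectI exI[of _ "[:x:]"]) auto
  have 2: "x + y \<in> adj K z \<and> x * y \<in> adj K z" if xy: "x \<in> adj K z" "y \<in> adj K z" for x y
  proof -
    obtain p q where "x = poly p z" "y = poly q z" "Kpoly K p" "Kpoly K q"
      using xy unfolding adj_def by blast
    thus ?thesis unfolding adj_def using sf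
      by (intro conjI CollectI exI[of _ "p + q"] exI[of _ "p * q"]) auto
  qed
  show ?thesis unfolding subring_C_def using 1 2 by blast
qed

lemma adj_sub: "subfield_C K \<Longrightarrow> K \<subseteq> l \<Longrightarrow> z \<in> l \<Longrightarrow> adj K z \<subseteq> l"
  unfolding adj_def using sf_poly[OF sfl] Kpoly_mono by blast

lemma adj_base: "subfield_C K \<Longrightarrow> K \<subseteq> adj K z"
  unfolding adj_def by (auto intro!: exI[of _ "[:_:]"])

lemma adj_z: "subfield_C K \<Longrightarrow> z \<in> adj K z"
  unfolding adj_def by (auto intro!: exI[of _ "[:0,1:]"])

lemma adj_subfield: "subfield_C K \<Longrightarrow> K \<subseteq> l \<Longrightarrow> z \<in> l \<Longrightarrow> subfield_C (adj K z)"
proof -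
  assume sf: "subfield_C K" and Kl: "K \<subseteq> l" and z: "z \<in> l"
  have R: "subring_C (adj K z)" by (rule adj_subring[OF sf])
  have Rl: "adj K z \<subseteq> l" by (rule adj_sub[OF sf Kl z])
  have neg: "- x \<in> adj K z" if "x \<in> adj K z" for x
  proof -
    have "-1 \<in> adj K z" using R by (auto simp: subring_C_def)
    hence "(-1) * x \<in> adj K z" using R that by (auto simp: subring_C_def)
    thus ?thesis by simp
  qed
  show ?thesis unfolding subfield_C_def
    using R neg subring_inverse[OF nf R Rl] by (auto simp: subring_C_def)
qed

lemma ext_step:
  assumes sf: "subfield_C K" and Kl: "K \<subseteq> l" and emb: "embedding K \<phi>" and z: "z \<in> l"
    and m: "is_minpoly K z m" and z': "poly (map_poly \<phi> m) z' = 0"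
  shows "\<exists>K' \<phi>'. subfield_C K' \<and> K \<subseteq> K' \<and> K' \<subseteq> l \<and> z \<in> K' \<and> embedding K' \<phi>' \<and>
            (\<forall>x\<in>K. \<phi>' x = \<phi> x) \<and> \<phi>' z = z'"
proof -
  have mK: "Kpoly K m" using m by (simp add: is_minpoly_def)
  have wd: "poly (map_poly \<phi> p) z' = poly (map_poly \<phi> q) z'"
    if "Kpoly K p" "Kpoly K q" "poly p z = poly q z" for p q
  proof -
    have "Kpoly K (p - q)" "poly (p - q) z = 0" using that sf by auto
    then obtain s where s: "Kpoly K s" "p - q = s * m" using minpoly_dvd[OF sf m] by blast
    have "map_poly \<phi> p - map_poly \<phi> q = map_poly \<phi> s * map_poly \<phi> m"
      using s that mK by (simp add: map_diff[OF sf emb, symmetric] map_mult[OF sf emb])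
    hence "poly (map_poly \<phi> p) z' - poly (map_poly \<phi> q) z' = 0"
      using z' by (metis mult_zero_right poly_diff poly_mult)
    thus ?thesis by simp
  qed
  define \<phi>' where "\<phi>' = (\<lambda>x. poly (map_poly \<phi> (SOME p. Kpoly K p \<and> poly p z = x)) z')"
  have ev: "\<phi>' (poly p z) = poly (map_poly \<phi> p) z'" if "Kpoly K p" for p
  proof -
    have "\<exists>q. Kpoly K q \<and> poly q z = poly p z" using that by blast
    hence "Kpoly K (SOME q. Kpoly K q \<and> poly q z = poly p z) \<and>
           poly (SOME q. Kpoly K q \<and> poly q z = poly p z) z = poly p z" by (rule someI_ex)
    thus ?thesis unfolding \<phi>'_def using wd that by blast
  qed
  have "embedding (adj K z) \<phi>'"
    unfolding embedding_def
  proof (intro conjI ballI)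
    have "\<phi>' (poly 1 z) = poly (map_poly \<phi> 1) z'" using ev[of 1] sf by auto
    thus "\<phi>' 1 = 1" using emb_1[OF sf emb] by simp
  next
    fix x y assume "x \<in> adj K z" "y \<in> adj K z"
    then obtain p q where pq: "x = poly p z" "y = poly q z" "Kpoly K p" "Kpoly K q"
      unfolding adj_def by blast
    have "\<phi>' (x + y) = \<phi>' (poly (p + q) z)" using pq by simp
    also have "\<dots> = poly (map_poly \<phi> (p + q)) z'" using ev pq sf by blast
    also have "\<dots> = \<phi>' x + \<phi>' y" using pq ev by (simp add: map_add[OF sf emb])
    finally show "\<phi>' (x + y) = \<phi>' x + \<phi>' y" .
    have "\<phi>' (x * y) = \<phi>' (poly (p * q) z)" using pq by simp
    also have "\<dots> = poly (map_poly \<phi> (p * q)) z'" using ev pq sf by blast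
    also have "\<dots> = \<phi>' x * \<phi>' y" using pq ev by (simp add: map_mult[OF sf emb])
    finally show "\<phi>' (x * y) = \<phi>' x * \<phi>' y" .
  qed
  moreover have "\<forall>x\<in>K. \<phi>' x = \<phi> x"
  proof
    fix x assume x: "x \<in> K"
    have "\<phi>' (poly [:x:] z) = poly (map_poly \<phi> [:x:]) z'" using ev x sf by blast
    thus "\<phi>' x = \<phi> x" by (simp add: map_const[OF sf emb])
  qed
  moreover have "\<phi>' z = z'"
  proof -
    have "\<phi>' (poly [:0,1:] z) = poly (map_poly \<phi> [:0,1:]) z'" using ev sf by blast
    thus ?thesis by (simp add: map_X[OF sf emb])
  qed
  ultimately show ?thesis
    using adj_subfield[OF sf Kl z] adj_base[OF sf] adj_sub[OF sf Kl z] adj_z[OF sf]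
    by blast
qed

lemma ext_step_root:
  assumes sf: "subfield_C K" and Kl: "K \<subseteq> l" and emb: "embedding K \<phi>" and z: "z \<in> l"
  shows "\<exists>K' \<phi>'. subfield_C K' \<and> K \<subseteq> K' \<and> K' \<subseteq> l \<and> z \<in> K' \<and> embedding K' \<phi>' \<and>
            (\<forall>x\<in>K. \<phi>' x = \<phi> x)"
proof -
  obtain m where m: "is_minpoly K z m" using minpoly_ex[OF nf sf Kl z] unfolding is_minpoly_def by blast
  have mm: "Kpoly K m" "lead_coeff m = 1" "poly m z = 0" using m by (auto simp: is_minpoly_def)
  have "degree m \<noteq> 0"
  proof
    assume "degree m = 0"
    hence "m = [:1:]" using mm(2) by (metis degree_0_id)
    thus False using mm(3) by simp
  qed
  moreover have "coeff (map_poly \<phi> m) (degree m) = 1"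
    using mm(2) by (simp add: coeff_map_poly emb_0[OF sf emb] emb_1[OF sf emb])
  ultimately have "degree (map_poly \<phi> m) > 0"
    by (metis gr0I le_degree le_zero_eq one_neq_zero)
  then obtain z' where "poly (map_poly \<phi> m) z' = 0" using fta_root by blast
  from ext_step[OF sf Kl emb z m this] show ?thesis by blast
qed

lemma ext_list:
  "set zs \<subseteq> l \<Longrightarrow> subfield_C K \<Longrightarrow> K \<subseteq> l \<Longrightarrow> embedding K \<phi> \<Longrightarrow>
   \<exists>K' \<phi>'. subfield_C K' \<and> K \<subseteq> K' \<and> K' \<subseteq> l \<and> set zs \<subseteq> K' \<and> embedding K' \<phi>' \<and>
            (\<forall>x\<in>K. \<phi>' x = \<phi> x)"
proof (induction zs arbitrary: K \<phi>)
  case Nil thus ?case by (intro exI[of _ K] exI[of _ \<phi>]) auto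
next
  case (Cons z zs)
  obtain K1 \<phi>1 where 1: "subfield_C K1" "K \<subseteq> K1" "K1 \<subseteq> l" "z \<in> K1" "embedding K1 \<phi>1"
    "\<forall>x\<in>K. \<phi>1 x = \<phi> x"
  proof -
    have "z \<in> l" using Cons.prems(1) by simp
    from ext_step_root[OF Cons.prems(2,3,4) this] show ?thesis using that by blast
  qed
  obtain K2 \<phi>2 where 2: "subfield_C K2" "K1 \<subseteq> K2" "K2 \<subseteq> l" "set zs \<subseteq> K2" "embedding K2 \<phi>2"
    "\<forall>x\<in>K1. \<phi>2 x = \<phi>1 x"
  proof -
    have "set zs \<subseteq> l" using Cons.prems(1) by simp
    from Cons.IH[OF this 1(1,3,5)] show ?thesis using that by blast
  qed
  have "K \<subseteq> K2" using 1(2) 2(2) by (rule order_trans)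
  moreover have "set (z # zs) \<subseteq> K2" using 1(4) 2(2,4) by auto
  moreover have "\<forall>x\<in>K. \<phi>2 x = \<phi> x" using 1(2,6) 2(6) by auto
  ultimately show ?case using 2(1,3,5) by blast
qed

lemma emb_extend:
  assumes sf: "subfield_C K" and Kl: "K \<subseteq> l" and emb: "embedding K \<phi>"
  shows "\<exists>\<sigma>. embedding l \<sigma> \<and> (\<forall>x\<in>K. \<sigma> x = \<phi> x)"
proof -
  obtain B where B: "finite B" "B \<subseteq> l" "l = rs.span B"
    using nf unfolding number_field_def by blast
  obtain zs where zs: "set zs = B" using finite_list[OF B(1)] by blast
  obtain K' \<phi>' where K': "subfield_C K'" "K \<subseteq> K'" "K' \<subseteq> l" "B \<subseteq> K'" "embedding K' \<phi>'"
    "\<forall>x\<in>K. \<phi>' x = \<phi> x"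
    using ext_list[OF _ sf Kl emb, of zs] zs B(2) by auto
  have "rs.subspace K'"
    unfolding rs.subspace_def rat_scale_def using K'(1) sf_Rats[OF K'(1)]
    by (auto intro!: sf_add sf_mult)
  hence "rs.span B \<subseteq> K'" using K'(4) by (rule rs.span_minimal[rotated])
  hence "K' = l" using K'(3) B(3) by auto
  thus ?thesis using K' by blast
qed

end



lemma other_root:
  assumes m: "is_minpoly \<rat> y m" and y: "y \<notin> \<rat>"
  shows "\<exists>y'. poly m y' = 0 \<and> y' \<noteq> y"
proof -
  have mQ: "Kpoly \<rat> m" "lead_coeff m = 1" "poly m y = 0" using m by (auto simp: is_minpoly_def)
  have min: "degree m \<le> degree p" if "Kpoly \<rat> p" "p \<noteq> 0" "poly p y = 0" for p
    using m that by (auto simp: is_minpoly_def)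
  have d0: "degree m \<noteq> 0"
  proof
    assume "degree m = 0"
    hence "m = [:1:]" using mQ(2) by (metis degree_0_id)
    thus False using mQ(3) by simp
  qed
  have d1: "degree m \<noteq> 1"
  proof
    assume d: "degree m = 1"
    have "0 = (\<Sum>i\<le>1. coeff m i * y ^ i)" using mQ(3) unfolding poly_altdef d by simp
    also have "\<dots> = coeff m 0 + coeff m 1 * y" by simp
    also have "coeff m 1 = 1" using mQ(2) d by simp
    finally have "y = - coeff m 0" by (simp add: eq_neg_iff_add_eq_0 add.commute)
    moreover have "coeff m 0 \<in> \<rat>" using mQ(1) by (simp add: Kpoly_def)
    ultimately show False using y by simp
  qed
  obtain r where r: "m = [:-y, 1:] * r" using mQ(3) poly_eq_0_iff_dvd by (metis dvdE)
  have m0: "m \<noteq> 0" using mQ(2) by auto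
  hence r0: "r \<noteq> 0" using r by auto
  have "degree ([:-y, 1:] * r) = degree [:-y, 1:] + degree r" by (rule degree_mult_eq) (use r0 in auto)
  hence "degree m = 1 + degree r" using r by simp
  hence "degree r > 0" using d0 d1 by linarith
  then obtain w where w: "poly r w = 0" using fta_root by blast
  show ?thesis
  proof (cases "w = y")
    case False
    thus ?thesis using w r by (intro exI[of _ w]) simp
  next
    case True
    have "pderiv m = [:-y, 1:] * pderiv r + r * pderiv [:-y, 1:]" unfolding r by (rule pderiv_mult)
    moreover have "pderiv [:-y, 1:] = 1" by (simp add: pderiv_pCons)
    ultimately have "poly (pderiv m) y = 0" using w True by simp
    moreover have "pderiv m \<noteq> 0"
    proof
      assume "pderiv m = 0"
      hence "degree (pderiv m) = 0" by simp
      thus False using degree_pderiv[of m] d0 d1 by simp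
    qed
    moreover have "Kpoly \<rat> (pderiv m)" using mQ(1) sf_Rats_self by blast
    ultimately have "degree m \<le> degree (pderiv m)" using min by blast
    thus ?thesis using degree_pderiv[of m] d0 by simp
  qed
qed

lemma emb_Rats_id: "embedding \<rat> id"
  by (simp add: embedding_def)

context fixes l :: "complex set" assumes nf: "number_field l"
begin

lemma nonrational_moved:
  assumes y: "y \<in> l" "y \<notin> \<rat>"
  shows "\<exists>\<sigma>. embedding l \<sigma> \<and> \<sigma> y \<noteq> y"
proof -
  have sfl: "subfield_C l" using nf by (simp add: number_field_def)
  have Ql: "\<rat> \<subseteq> l" using sf_Rats[OF sfl] .
  obtain m where m: "is_minpoly \<rat> y m"
    using minpoly_ex[OF nf sf_Rats_self Ql y(1)] unfolding is_minpoly_def by blast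
  obtain y' where y': "poly m y' = 0" "y' \<noteq> y" using other_root[OF m y(2)] by blast
  have "poly (map_poly id m) y' = 0" using y' by simp
  from ext_step[OF nf sf_Rats_self Ql emb_Rats_id y(1) m this]
  obtain K' \<phi>' where K': "subfield_C K'" "K' \<subseteq> l" "embedding K' \<phi>'" "y \<in> K'" "\<phi>' y = y'"
    by blast
  obtain \<sigma> where \<sigma>: "embedding l \<sigma>" "\<forall>x\<in>K'. \<sigma> x = \<phi>' x"
    using emb_extend[OF nf K'(1,2,3)] by blast
  show ?thesis using \<sigma> K'(4,5) y'(2) by (intro exI[of _ \<sigma>]) auto
qed

lemma emb_onto:
  assumes emb: "embedding l \<sigma>" and into: "\<sigma> ` l \<subseteq> l"
  shows "\<sigma> ` l = l"
proof
  show "\<sigma> ` l \<subseteq> l" by (rule into)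
next
  have sfl: "subfield_C l" using nf by (simp add: number_field_def)
  show "l \<subseteq> \<sigma> ` l"
  proof
    fix x assume x: "x \<in> l"
    obtain p where p: "p \<noteq> 0" "Kpoly \<rat> p" "poly p x = 0" using nf_alg[OF nf x] by blast
    define R where "R = {r \<in> l. poly p r = 0}"
    have fin: "finite R" unfolding R_def using poly_roots_finite[OF p(1)] by (rule rev_finite_subset) auto
    have sub: "\<sigma> ` R \<subseteq> R"
    proof
      fix s assume "s \<in> \<sigma> ` R"
      then obtain r where r: "r \<in> l" "poly p r = 0" "s = \<sigma> r" unfolding R_def by blast
      have "\<sigma> (poly p r) = poly p (\<sigma> r)" by (rule emb_poly_Rats[OF sfl emb p(2) r(1)])
      hence "poly p s = 0" using r emb_0[OF sfl emb] by simp
      moreover have "s \<in> l" using r into by auto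
      ultimately show "s \<in> R" unfolding R_def by blast
    qed
    have "inj_on \<sigma> R" using emb_inj[OF sfl emb] unfolding R_def by (rule inj_on_subset) auto
    hence "card (\<sigma> ` R) = card R" by (rule card_image)
    hence "\<sigma> ` R = R" using card_subset_eq[OF fin sub] by simp
    moreover have "x \<in> R" using x p unfolding R_def by simp
    ultimately have "x \<in> \<sigma> ` R" by simp
    thus "x \<in> \<sigma> ` l" unfolding R_def by blast
  qed
qed

lemma normalize_Gal:
  assumes emb: "embedding l \<sigma>" and into: "\<sigma> ` l \<subseteq> l"
  shows "(\<lambda>x. if x \<in> l then \<sigma> x else x) \<in> Gal l"
proof -
  have sfl: "subfield_C l" using nf by (simp add: number_field_def)
  let ?s = "\<lambda>x. if x \<in> l then \<sigma> x else x"
  have "embedding l ?s" using emb sfl unfolding embedding_def by (auto simp: sf_add sf_mult)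
  moreover have "bij_betw ?s l l"
  proof (rule bij_betw_imageI)
    show "inj_on ?s l" using emb_inj[OF sfl emb] by (auto simp: inj_on_def)
    have "?s ` l = \<sigma> ` l" by (auto intro: image_cong)
    thus "?s ` l = l" using emb_onto[OF emb into] by simp
  qed
  ultimately show ?thesis unfolding Gal_def by auto
qed

end

lemma fixed_rational:
  assumes gal: "galois_over_Q l" and y: "y \<in> l" and fx: "\<forall>g\<in>Gal l. g y = y"
  shows "y \<in> \<rat>"
proof (rule ccontr)
  assume "y \<notin> \<rat>"
  have nf: "number_field l" using gal by (simp add: galois_over_Q_def)
  obtain \<sigma> where \<sigma>: "embedding l \<sigma>" "\<sigma> y \<noteq> y" using nonrational_moved[OF nf y \<open>y \<notin> \<rat>\<close>] by blast
  have "\<sigma> ` l \<subseteq> l" using gal \<sigma>(1) by (simp add: galois_over_Q_def)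
  from normalize_Gal[OF nf \<sigma>(1) this] fx y \<sigma>(2) show False by auto
qed







lemma emb_alg_int:
  assumes sf: "subfield_C l" and emb: "embedding l \<sigma>" and x: "x \<in> l" and a: "algebraic_int x"
  shows "algebraic_int (\<sigma> x)"
proof -
  obtain p where p: "lead_coeff p = 1" "\<forall>i. coeff p i \<in> \<int>" "poly p x = 0"
    using a by (auto elim: algebraic_int.cases)
  have "Kpoly \<rat> p" using p(2) Ints_subset_Rats by (auto simp: Kpoly_def)
  hence "\<sigma> (poly p x) = poly p (\<sigma> x)" by (rule emb_poly_Rats[OF sf emb _ x])
  hence "poly p (\<sigma> x) = 0" using p(3) emb_0[OF sf emb] by simp
  thus ?thesis using p by (intro algebraic_int.intros) auto
qed

lemma algebraic_int_prod: "(\<And>i. i \<in> A \<Longrightarrow> algebraic_int (f i :: complex)) \<Longrightarrow> algebraic_int (prod f A)"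
proof (induction A rule: infinite_finite_induct)
  case (insert x F)
  have "algebraic_int (f x * prod f F)" using insert by (intro algebraic_int_mult) auto
  thus ?case using insert by simp
qed (auto intro: int_imp_algebraic_int)

context fixes l :: "complex set" assumes sfl: "subfield_C l"
begin

lemma Gal_emb: "g \<in> Gal l \<Longrightarrow> embedding l g" by (simp add: Gal_def)
lemma Gal_in: "g \<in> Gal l \<Longrightarrow> x \<in> l \<Longrightarrow> g x \<in> l"
  by (auto simp: Gal_def bij_betw_def)
lemma Gal_out: "g \<in> Gal l \<Longrightarrow> x \<notin> l \<Longrightarrow> g x = x" by (simp add: Gal_def)
lemma Gal_image: "g \<in> Gal l \<Longrightarrow> g ` l = l" by (simp add: Gal_def bij_betw_def)

lemma Gal_bij: assumes g: "g \<in> Gal l" shows "bij g"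
proof (rule bijI)
  show "inj g"
  proof (rule injI)
    fix x y assume e: "g x = g y"
    have il: "inj_on g l" using g by (simp add: Gal_def bij_betw_def)
    show "x = y"
    proof (cases "x \<in> l"; cases "y \<in> l")
      assume "x \<in> l" "y \<in> l" thus ?thesis using il e by (auto dest: inj_onD)
    next
      assume "x \<in> l" "y \<notin> l" thus ?thesis using e Gal_in[OF g, of x] Gal_out[OF g, of y] by auto
    next
      assume "x \<notin> l" "y \<in> l" thus ?thesis using e Gal_in[OF g, of y] Gal_out[OF g, of x] by auto
    next
      assume "x \<notin> l" "y \<notin> l" thus ?thesis using e Gal_out[OF g] by auto
    qed
  qed
  show "surj g" unfolding surj_def
  proof
    fix y show "\<exists>x. y = g x"
    proof (cases "y \<in> l")
      case True hence "y \<in> g ` l" using Gal_image[OF g] by simp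
      thus ?thesis by blast
    next
      case False thus ?thesis using Gal_out[OF g False] by (intro exI[of _ y]) simp
    qed
  qed
qed

lemma Gal_inv_f: "g \<in> Gal l \<Longrightarrow> inv g (g x) = x"
  by (rule inv_f_f[OF bij_is_inj[OF Gal_bij]])
lemma Gal_f_inv: "g \<in> Gal l \<Longrightarrow> g (inv g x) = x"
  by (rule surj_f_inv_f[OF bij_is_surj[OF Gal_bij]])

lemma Gal_comp: assumes g: "g \<in> Gal l" and h: "h \<in> Gal l" shows "g \<circ> h \<in> Gal l"
proof -
  have eg: "embedding l g" and eh: "embedding l h" using g h by (auto simp: Gal_def)
  have "embedding l (g \<circ> h)" unfolding embedding_def
  proof (intro conjI ballI)
    show "(g \<circ> h) 1 = 1" using eg eh by (simp add: embedding_def)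
  next
    fix x y assume "x \<in> l" "y \<in> l"
    thus "(g \<circ> h) (x + y) = (g \<circ> h) x + (g \<circ> h) y" "(g \<circ> h) (x * y) = (g \<circ> h) x * (g \<circ> h) y"
      using emb_add[OF sfl eh] emb_mult[OF sfl eh] emb_add[OF sfl eg] emb_mult[OF sfl eg] Gal_in[OF h] by auto
  qed
  moreover have "bij_betw (g \<circ> h) l l" using g h by (auto simp: Gal_def intro: bij_betw_trans)
  moreover have "\<forall>x. x \<notin> l \<longrightarrow> (g \<circ> h) x = x" using Gal_out[OF g] Gal_out[OF h] by simp
  ultimately show ?thesis by (simp add: Gal_def)
qed

lemma Gal_inv: assumes g: "g \<in> Gal l" shows "inv g \<in> Gal l"
proof -
  have eg: "embedding l g" using g by (simp add: Gal_def)
  have inl: "inv g y \<in> l" if "y \<in> l" for y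
  proof -
    have "y \<in> g ` l" using that Gal_image[OF g] by simp
    then obtain x where "x \<in> l" "y = g x" by blast
    thus ?thesis using Gal_inv_f[OF g] by simp
  qed
  have out: "inv g y = y" if "y \<notin> l" for y
    using Gal_inv_f[OF g, of y] Gal_out[OF g that] by simp
  have "embedding l (inv g)" unfolding embedding_def
  proof (intro conjI ballI)
    show "inv g 1 = 1" using Gal_inv_f[OF g, of 1] eg by (simp add: embedding_def)
  next
    fix x y assume x: "x \<in> l" and y: "y \<in> l"
    have 1: "g (inv g x + inv g y) = x + y"
      using emb_add[OF sfl eg inl[OF x] inl[OF y]] Gal_f_inv[OF g] by simp
    have "inv g (x + y) = inv g (g (inv g x + inv g y))" unfolding 1 ..
    hence a: "inv g (x + y) = inv g x + inv g y" unfolding Gal_inv_f[OF g] .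
    have 2: "g (inv g x * inv g y) = x * y"
      using emb_mult[OF sfl eg inl[OF x] inl[OF y]] Gal_f_inv[OF g] by simp
    have "inv g (x * y) = inv g (g (inv g x * inv g y))" unfolding 2 ..
    hence b: "inv g (x * y) = inv g x * inv g y" unfolding Gal_inv_f[OF g] .
    from a b show "inv g (x + y) = inv g x + inv g y" "inv g (x * y) = inv g x * inv g y" by auto
  qed
  moreover have "bij_betw (inv g) l l"
  proof (rule bij_betw_imageI)
    show "inj_on (inv g) l" using bij_is_inj[OF bij_imp_bij_inv[OF Gal_bij[OF g]]] subset_UNIV by (rule inj_on_subset)
    show "inv g ` l = l"
    proof
      show "inv g ` l \<subseteq> l" using inl by auto
      show "l \<subseteq> inv g ` l"
      proof
        fix x assume "x \<in> l"
        hence "g x \<in> l" "x = inv g (g x)" using Gal_in[OF g] Gal_inv_f[OF g] by auto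
        thus "x \<in> inv g ` l" by blast
      qed
    qed
  qed
  ultimately show ?thesis using out unfolding Gal_def by blast
qed

lemma Gal_left_bij: assumes h: "h \<in> Gal l" and G: "G = Gal l" shows "bij_betw (\<lambda>g. h \<circ> g) G G"
proof (rule bij_betwI[where g = "\<lambda>g. inv h \<circ> g"])
  show "(\<lambda>g. h \<circ> g) \<in> G \<rightarrow> G" using Gal_comp[OF h] G by auto
  show "(\<lambda>g. inv h \<circ> g) \<in> G \<rightarrow> G" using Gal_comp[OF Gal_inv[OF h]] G by auto
  show "inv h \<circ> (h \<circ> x) = x" for x using Gal_inv_f[OF h] by (auto simp: fun_eq_iff)
  show "h \<circ> (inv h \<circ> y) = y" for y using Gal_f_inv[OF h] by (auto simp: fun_eq_iff)
qed

end





lemma emb_comp_Gal: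
  assumes sfl: "subfield_C l" and e: "embedding l \<sigma>" and g: "g \<in> Gal l"
  shows "embedding l (\<sigma> \<circ> g)"
proof -
  have eg: "embedding l g" using g by (simp add: Gal_def)
  show ?thesis unfolding embedding_def
  proof (intro conjI ballI)
    show "(\<sigma> \<circ> g) 1 = 1" using e eg by (simp add: embedding_def)
  next
    fix x y assume "x \<in> l" "y \<in> l"
    thus "(\<sigma> \<circ> g) (x + y) = (\<sigma> \<circ> g) x + (\<sigma> \<circ> g) y" "(\<sigma> \<circ> g) (x * y) = (\<sigma> \<circ> g) x * (\<sigma> \<circ> g) y"
      using emb_add[OF sfl eg] emb_mult[OF sfl eg] emb_add[OF sfl e] emb_mult[OF sfl e] Gal_in[OF sfl g] by auto
  qed
qed

lemma arch_mult:
  assumes sfl: "subfield_C l" and w: "w \<in> arch_places l" and x: "x \<in> l" and y: "y \<in> l"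
  shows "w (x * y) = w x * w y"
proof -
  obtain \<sigma> where \<sigma>: "embedding l \<sigma>" "w = (\<lambda>x. if x \<in> l then cmod (\<sigma> x) else 0)"
    using w unfolding arch_places_def by blast
  show ?thesis using x y \<sigma> emb_mult[OF sfl \<sigma>(1) x y] sf_mult[OF sfl x y] by (simp add: norm_mult)
qed

lemma arch_pos:
  assumes sfl: "subfield_C l" and w: "w \<in> arch_places l" and x: "x \<in> l" "x \<noteq> 0"
  shows "w x > 0"
proof -
  obtain \<sigma> where \<sigma>: "embedding l \<sigma>" "w = (\<lambda>x. if x \<in> l then cmod (\<sigma> x) else 0)"
    using w unfolding arch_places_def by blast
  show ?thesis using x \<sigma> emb_nonzero[OF sfl \<sigma>(1) x] by simp
qed

lemma arch_out:
  assumes w: "w \<in> arch_places l" and x: "x \<notin> l"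
  shows "w x = 0"
  using w x unfolding arch_places_def by auto

theorem lemma5p3:
  fixes l :: "complex set" and wh :: "complex \<Rightarrow> real"
    and \<rho> :: "complex \<Rightarrow> complex" and \<beta> :: complex and \<tau> :: "nat \<Rightarrow> complex \<Rightarrow> complex"
  assumes "galois_over_Q l" and "totally_complex l"
    and "wh \<in> arch_places l"
    and "\<rho> \<in> Gal l" and "stabilizer l wh = {id, \<rho>}" and "\<rho> \<circ> \<rho> = id"
    and "special_minkowski l wh \<beta>"
    and "\<forall>n \<in> {1..card (arch_places l)}. \<tau> n \<in> Gal l"
    and "\<forall>\<sigma> \<in> Gal l. \<exists>!n. n \<in> {1..card (arch_places l)} \<and>
            (\<exists>h \<in> stabilizer l wh. \<sigma> = \<tau> n \<circ> h)"
  shows "special_minkowski l wh (\<rho> \<beta>) \<and> special_minkowski l wh (\<beta> * \<rho> \<beta>) \<and>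
    (\<forall>m \<in> {1..card (arch_places l)}.
       (\<Sum>n = 1..card (arch_places l). ln (abs_place l wh (inv (\<tau> m) (\<tau> n (\<beta> * \<rho> \<beta>))))) = 0)"
proof -
  note gal = assms(1) and tc = assms(2) and whA = assms(3) and rhoG = assms(4) and stab = assms(5)
    and rr = assms(6) and sm = assms(7) and tauG = assms(8) and trans = assms(9)
  define I where "I = {1..card (arch_places l)}"
  define G where "G = Gal l"
  define S where "S = stabilizer l wh"
  have nf: "number_field l" using gal by (simp add: galois_over_Q_def)
  have sfl: "subfield_C l" using nf by (simp add: number_field_def)
  obtain \<sigma>0 where \<sigma>0: "embedding l \<sigma>0" "wh = (\<lambda>x. if x \<in> l then cmod (\<sigma>0 x) else 0)"
    using whA unfolding arch_places_def by blast
  have ld: "local_degree l w = 2" for w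
  proof -
    have "\<not> (\<exists>\<sigma>. embedding l \<sigma> \<and> \<sigma> ` l \<subseteq> \<real>)"
      using tc unfolding totally_complex_def by blast
    thus ?thesis unfolding local_degree_def by auto
  qed
  define c where "c = 2 / real (field_degree l)"
  have ap: "abs_place l w x = w x powr c" for w x unfolding abs_place_def ld c_def by simp
  have lnap: "ln (abs_place l w x) = c * ln (w x)" for w x unfolding ap by (rule ln_powr)
  have \<beta>: "\<beta> \<in> l" "\<beta> \<noteq> 0" "algebraic_int \<beta>" "algebraic_int (inverse \<beta>)"
    using sm by (auto simp: special_minkowski_def unit_Ol_def)
  have smneg: "ln (abs_place l w \<beta>) < 0" if "w \<in> arch_places l" "w \<noteq> wh" for w
    using sm that by (auto simp: special_minkowski_def)
  have e\<rho>: "embedding l \<rho>" using rhoG by (simp add: Gal_def)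
  have \<rho>l: "\<rho> x \<in> l" if "x \<in> l" for x using Gal_in[OF sfl rhoG that] .
  have \<rho>\<rho>: "\<rho> (\<rho> x) = x" for x using rr by (metis comp_apply id_apply)
  have inv\<rho>: "inv \<rho> = \<rho>" using inv_unique_comp[OF rr rr] .
  have "\<rho> \<in> stabilizer l wh" using stab by simp
  hence "wh \<circ> inv \<rho> = wh" by (simp add: stabilizer_def place_act_def)
  hence wh\<rho>: "wh (\<rho> x) = wh x" for x unfolding inv\<rho> by (metis comp_apply)
  have twist: "\<exists>w'\<in>arch_places l. w' \<noteq> wh \<and> (\<forall>x\<in>l. w (\<rho> x) = w' x)"
    if w: "w \<in> arch_places l" "w \<noteq> wh" for w
  proof -
    obtain \<sigma> where \<sigma>: "embedding l \<sigma>" "w = (\<lambda>x. if x \<in> l then cmod (\<sigma> x) else 0)"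
      using w unfolding arch_places_def by blast
    define w' where "w' = (\<lambda>x. if x \<in> l then cmod ((\<sigma> \<circ> \<rho>) x) else 0)"
    have w'A: "w' \<in> arch_places l"
      unfolding arch_places_def w'_def using emb_comp_Gal[OF sfl \<sigma>(1) rhoG] by blast
    have eq: "\<forall>x\<in>l. w (\<rho> x) = w' x" using \<sigma>(2) \<rho>l by (simp add: w'_def)
    have "w' \<noteq> wh"
    proof
      assume h: "w' = wh"
      have "w = wh"
      proof
        fix x show "w x = wh x"
        proof (cases "x \<in> l")
          case True
          have "w x = w (\<rho> (\<rho> x))" by (simp add: \<rho>\<rho>)
          also have "\<dots> = w' (\<rho> x)" using eq \<rho>l[OF True] by simp
          also have "\<dots> = wh x" using h wh\<rho> by simp
          finally show ?thesis .
        next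
          case False thus ?thesis using \<sigma>(2) \<sigma>0(2) by simp
        qed
      qed
      thus False using w(2) by simp
    qed
    thus ?thesis using w'A eq by blast
  qed
  have \<rho>\<beta>: "\<rho> \<beta> \<in> l" "\<rho> \<beta> \<noteq> 0" using \<rho>l[OF \<beta>(1)] emb_nonzero[OF sfl e\<rho> \<beta>(1,2)] by auto
  have part1: "special_minkowski l wh (\<rho> \<beta>)"
    unfolding special_minkowski_def unit_Ol_def
  proof (intro conjI ballI impI)
    show "\<rho> \<beta> \<in> l" "\<rho> \<beta> \<noteq> 0" by (fact \<rho>\<beta>)+
    show "algebraic_int (\<rho> \<beta>)" by (rule emb_alg_int[OF sfl e\<rho> \<beta>(1,3)])
    have "inverse (\<rho> \<beta>) = \<rho> (inverse \<beta>)" using emb_inverse[OF sfl e\<rho> \<beta>(1)] by simp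
    thus "algebraic_int (inverse (\<rho> \<beta>))"
      using emb_alg_int[OF sfl e\<rho> sf_inverse[OF sfl \<beta>(1)] \<beta>(4)] by simp
  next
    fix w assume w: "w \<in> arch_places l" "w \<noteq> wh"
    obtain w' where w': "w' \<in> arch_places l" "w' \<noteq> wh" "\<forall>x\<in>l. w (\<rho> x) = w' x"
      using twist[OF w] by blast
    have "abs_place l w (\<rho> \<beta>) = abs_place l w' \<beta>" unfolding ap using w'(3) \<beta>(1) by simp
    thus "ln (abs_place l w (\<rho> \<beta>)) < 0" using smneg[OF w'(1,2)] by simp
  qed
  have part2: "special_minkowski l wh (\<beta> * \<rho> \<beta>)"
    unfolding special_minkowski_def unit_Ol_def
  proof (intro conjI ballI impI)
    show "\<beta> * \<rho> \<beta> \<in> l" using \<beta>(1) \<rho>\<beta>(1) sfl by (simp add: sf_mult)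
    show "\<beta> * \<rho> \<beta> \<noteq> 0" using \<beta>(2) \<rho>\<beta>(2) by simp
    have a: "algebraic_int (\<rho> \<beta>)" by (rule emb_alg_int[OF sfl e\<rho> \<beta>(1,3)])
    show "algebraic_int (\<beta> * \<rho> \<beta>)" using algebraic_int_mult[OF \<beta>(3) a] .
    have "inverse (\<rho> \<beta>) = \<rho> (inverse \<beta>)" using emb_inverse[OF sfl e\<rho> \<beta>(1)] by simp
    hence b: "algebraic_int (inverse (\<rho> \<beta>))"
      using emb_alg_int[OF sfl e\<rho> sf_inverse[OF sfl \<beta>(1)] \<beta>(4)] by simp
    show "algebraic_int (inverse (\<beta> * \<rho> \<beta>))"
      using algebraic_int_mult[OF \<beta>(4) b] by (simp add: inverse_mult_distrib)
  next
    fix w assume w: "w \<in> arch_places l" "w \<noteq> wh"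
    obtain w' where w': "w' \<in> arch_places l" "w' \<noteq> wh" "\<forall>x\<in>l. w (\<rho> x) = w' x"
      using twist[OF w] by blast
    have p1: "w \<beta> > 0" using arch_pos[OF sfl w(1) \<beta>(1,2)] .
    have p2: "w (\<rho> \<beta>) > 0" using arch_pos[OF sfl w(1) \<rho>\<beta>] .
    have "ln (abs_place l w (\<beta> * \<rho> \<beta>)) = c * ln (w \<beta> * w (\<rho> \<beta>))"
      unfolding lnap using arch_mult[OF sfl w(1) \<beta>(1) \<rho>\<beta>(1)] by simp
    also have "\<dots> = c * ln (w \<beta>) + c * ln (w' \<beta>)"
      using p1 p2 w'(3) \<beta>(1) by (simp add: ln_mult distrib_left)
    also have "\<dots> = ln (abs_place l w \<beta>) + ln (abs_place l w' \<beta>)" unfolding lnap ..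
    also have "\<dots> < 0" using smneg[OF w] smneg[OF w'(1,2)] by simp
    finally show "ln (abs_place l w (\<beta> * \<rho> \<beta>)) < 0" .
  qed
  have SG: "S \<subseteq> G" unfolding S_def G_def stabilizer_def by auto
  have S2: "S = {id, \<rho>}" using stab by (simp add: S_def)
  have tG: "\<tau> n \<in> G" if "n \<in> I" for n using tauG that by (simp add: I_def G_def)
  define \<Phi> :: "nat \<times> (complex \<Rightarrow> complex) \<Rightarrow> complex \<Rightarrow> complex" where "\<Phi> = (\<lambda>(n, h). \<tau> n \<circ> h)"
  have bij\<Phi>: "bij_betw \<Phi> (I \<times> S) G"
  proof (rule bij_betw_imageI)
    show "inj_on \<Phi> (I \<times> S)"
    proof (rule inj_onI, clarify)
      fix n h n' h' assume a: "n \<in> I" "h \<in> S" "n' \<in> I" "h' \<in> S" "\<Phi> (n, h) = \<Phi> (n', h')"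
      have eq: "\<tau> n \<circ> h = \<tau> n' \<circ> h'" using a(5) by (simp add: \<Phi>_def)
      have \<sigma>G: "\<tau> n \<circ> h \<in> G" using Gal_comp[OF sfl] tG[OF a(1)] SG a(2) by (auto simp: G_def)
      have "\<exists>!k. k \<in> I \<and> (\<exists>h'' \<in> S. \<tau> n \<circ> h = \<tau> k \<circ> h'')"
        using trans \<sigma>G by (simp add: I_def G_def S_def)
      moreover have "n \<in> I \<and> (\<exists>h'' \<in> S. \<tau> n \<circ> h = \<tau> n \<circ> h'')" using a by blast
      moreover have "n' \<in> I \<and> (\<exists>h'' \<in> S. \<tau> n \<circ> h = \<tau> n' \<circ> h'')" using a eq by blast
      ultimately have nn: "n = n'" by blast
      have ij: "inj (\<tau> n)" using Gal_bij[OF sfl] tG[OF a(1)] by (simp add: G_def bij_is_inj)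
      have "h = h'"
      proof
        fix x have "\<tau> n (h x) = \<tau> n (h' x)" using eq nn by (metis comp_apply)
        thus "h x = h' x" using ij by (simp add: inj_eq)
      qed
      thus "n = n' \<and> h = h'" using nn by simp
    qed
    show "\<Phi> ` (I \<times> S) = G"
    proof
      show "\<Phi> ` (I \<times> S) \<subseteq> G"
        using Gal_comp[OF sfl] tG SG by (auto simp: \<Phi>_def G_def)
      show "G \<subseteq> \<Phi> ` (I \<times> S)"
      proof
        fix \<sigma> assume "\<sigma> \<in> G"
        then obtain n h where "n \<in> I" "h \<in> S" "\<sigma> = \<tau> n \<circ> h"
          using trans by (auto simp: I_def G_def S_def)
        thus "\<sigma> \<in> \<Phi> ` (I \<times> S)" unfolding \<Phi>_def by force
      qed
    qed
  qed
  have finI: "finite I" by (simp add: I_def)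
  have finS: "finite S" using S2 by simp
  have finG: "finite G" using bij\<Phi> finI finS bij_betw_finite by blast
  have sumG: "(\<Sum>g\<in>G. F g) = (\<Sum>n\<in>I. \<Sum>h\<in>S. F (\<tau> n \<circ> h))" for F :: "(complex \<Rightarrow> complex) \<Rightarrow> real"
  proof -
    have "(\<Sum>g\<in>G. F g) = (\<Sum>x\<in>I \<times> S. F (\<Phi> x))" using sum.reindex_bij_betw[OF bij\<Phi>, of F] by simp
    also have "\<dots> = (\<Sum>n\<in>I. \<Sum>h\<in>S. F (\<tau> n \<circ> h))"
      unfolding sum.cartesian_product \<Phi>_def by (intro sum.cong) (auto split: prod.splits)
    finally show ?thesis .
  qed
  have sum2: "(\<Sum>n\<in>I. F (\<tau> n) + F (\<tau> n \<circ> \<rho>)) = 0" if F0: "(\<Sum>g\<in>G. F g) = 0" for F :: "(complex \<Rightarrow> complex) \<Rightarrow> real"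
  proof (cases "\<rho> = id")
    case True
    have "(\<Sum>n\<in>I. F (\<tau> n)) = 0" using F0 sumG[of F] S2 True by simp
    thus ?thesis using True by (simp add: sum_distrib_left[symmetric])
  next
    case False
    have "(\<Sum>h\<in>S. F (\<tau> n \<circ> h)) = F (\<tau> n) + F (\<tau> n \<circ> \<rho>)" for n
      using S2 False by (simp add: sum.insert)
    thus ?thesis using F0 sumG[of F] by simp
  qed
  have G\<beta>: "g \<beta> \<in> l" "g \<beta> \<noteq> 0" if "g \<in> G" for g
    using Gal_in[OF sfl _ \<beta>(1)] emb_nonzero[OF sfl Gal_emb[OF sfl] \<beta>(1,2)] that by (auto simp: G_def)
  define P where "P = (\<Prod>g\<in>G. g \<beta>)"
  have Pl: "P \<in> l" unfolding P_def by (rule sf_prod[OF sfl]) (use G\<beta> in auto)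
  have P0: "P \<noteq> 0" unfolding P_def using G\<beta> finG by simp
  have Pfix: "\<forall>h\<in>Gal l. h P = P"
  proof
    fix h assume h: "h \<in> Gal l"
    have "h P = (\<Prod>g\<in>G. h (g \<beta>))" unfolding P_def
      by (rule emb_prod[OF sfl Gal_emb[OF sfl h]]) (use G\<beta> in auto)
    also have "\<dots> = (\<Prod>g\<in>G. (\<lambda>g. g \<beta>) (h \<circ> g))" by simp
    also have "\<dots> = P" unfolding P_def by (rule prod.reindex_bij_betw[OF Gal_left_bij[OF sfl h G_def]])
    finally show "h P = P" .
  qed
  have PQ: "P \<in> \<rat>" by (rule fixed_rational[OF gal Pl Pfix])
  have Pint: "algebraic_int P" unfolding P_def
    using emb_alg_int[OF sfl Gal_emb[OF sfl] \<beta>(1,3)] by (intro algebraic_int_prod) (auto simp: G_def)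
  have "inverse P = (\<Prod>g\<in>G. inverse (g \<beta>))" unfolding P_def by (simp add: prod_inversef[symmetric] comp_def)
  also have "\<dots> = (\<Prod>g\<in>G. g (inverse \<beta>))"
    using emb_inverse[OF sfl Gal_emb[OF sfl] \<beta>(1)] by (auto simp: G_def intro!: prod.cong)
  finally have Pinv: "algebraic_int (inverse P)"
    using emb_alg_int[OF sfl Gal_emb[OF sfl] sf_inverse[OF sfl \<beta>(1)] \<beta>(4)]
    by (auto simp: G_def intro!: algebraic_int_prod)
  obtain a where a: "P = of_int a" using rational_algebraic_int_is_int[OF Pint PQ] by (auto elim: Ints_cases)
  obtain b where b: "inverse P = of_int b"
    using rational_algebraic_int_is_int[OF Pinv] PQ by (auto elim: Ints_cases)
  have "of_int (a * b) = (1 :: complex)" using a b P0 by (metis of_int_mult right_inverse)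
  hence "a * b = 1" by (metis of_int_eq_1_iff)
  hence "\<bar>a\<bar> = 1" by (auto simp: zmult_eq_1_iff)
  hence cP: "cmod P = 1" using a by (simp add: norm_of_int)
  have whP: "wh P = 1" using \<sigma>0 emb_Rats[OF sfl \<sigma>0(1) PQ] Pl cP by simp
  have whprod: "(\<Prod>g\<in>G. wh (g \<beta>)) = wh P"
  proof -
    have "(\<Prod>g\<in>G. wh (g \<beta>)) = (\<Prod>g\<in>G. cmod (\<sigma>0 (g \<beta>)))" using G\<beta> \<sigma>0(2) by simp
    also have "\<dots> = cmod (\<Prod>g\<in>G. \<sigma>0 (g \<beta>))" by (rule prod_norm)
    also have "(\<Prod>g\<in>G. \<sigma>0 (g \<beta>)) = \<sigma>0 P" unfolding P_def
      by (rule emb_prod[OF sfl \<sigma>0(1), symmetric]) (use G\<beta> in auto)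
    finally show ?thesis using Pl \<sigma>0(2) by simp
  qed
  have sumlog: "(\<Sum>g\<in>G. ln (wh (g \<beta>))) = 0"
  proof -
    have "(\<Sum>g\<in>G. ln (wh (g \<beta>))) = ln (\<Prod>g\<in>G. wh (g \<beta>))"
    proof (rule ln_prod[symmetric])
      show "finite G" by (rule finG)
      fix g assume "g \<in> G"
      thus "wh (g \<beta>) \<noteq> 0" using arch_pos[OF sfl whA, of "g \<beta>"] G\<beta>[of g] by auto
    qed
    thus ?thesis using whprod whP by simp
  qed
  have part3: "(\<Sum>n\<in>I. ln (abs_place l wh (inv (\<tau> m) (\<tau> n (\<beta> * \<rho> \<beta>))))) = 0" if m: "m \<in> I" for m
  proof -
    define t where "t = inv (\<tau> m)"
    have tG': "t \<in> G" unfolding t_def G_def using Gal_inv[OF sfl] tG[OF m] by (simp add: G_def)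
    define F where "F = (\<lambda>g. ln (wh (t (g \<beta>))))"
    have "(\<Sum>g\<in>G. F g) = (\<Sum>g\<in>G. (\<lambda>g. ln (wh (g \<beta>))) (t \<circ> g))" by (simp add: F_def)
    also have "\<dots> = 0" using sumlog
      by (subst sum.reindex_bij_betw[OF Gal_left_bij[OF sfl _ G_def]]) (use tG' G_def in auto)
    finally have F0: "(\<Sum>g\<in>G. F g) = 0" .
    have trm: "ln (abs_place l wh (t (\<tau> n (\<beta> * \<rho> \<beta>)))) = c * (F (\<tau> n) + F (\<tau> n \<circ> \<rho>))"
      if n: "n \<in> I" for n
    proof -
      have tn: "\<tau> n \<in> Gal l" using tG[OF n] by (simp add: G_def)
      have tl: "t \<in> Gal l" using tG' by (simp add: G_def)
      have x1: "\<tau> n \<beta> \<in> l" and x2: "\<tau> n (\<rho> \<beta>) \<in> l"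
        using Gal_in[OF sfl tn] \<beta>(1) \<rho>\<beta>(1) by auto
      have y1: "t (\<tau> n \<beta>) \<in> l" "t (\<tau> n \<beta>) \<noteq> 0"
        using Gal_in[OF sfl tl x1] emb_nonzero[OF sfl Gal_emb[OF sfl tl] x1]
          emb_nonzero[OF sfl Gal_emb[OF sfl tn] \<beta>(1,2)] by auto
      have y2: "t (\<tau> n (\<rho> \<beta>)) \<in> l" "t (\<tau> n (\<rho> \<beta>)) \<noteq> 0"
        using Gal_in[OF sfl tl x2] emb_nonzero[OF sfl Gal_emb[OF sfl tl] x2]
          emb_nonzero[OF sfl Gal_emb[OF sfl tn] \<rho>\<beta>] by auto
      have "t (\<tau> n (\<beta> * \<rho> \<beta>)) = t (\<tau> n \<beta>) * t (\<tau> n (\<rho> \<beta>))"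
        using emb_mult[OF sfl Gal_emb[OF sfl tn] \<beta>(1) \<rho>\<beta>(1)] emb_mult[OF sfl Gal_emb[OF sfl tl] x1 x2]
        by simp
      hence "wh (t (\<tau> n (\<beta> * \<rho> \<beta>))) = wh (t (\<tau> n \<beta>)) * wh (t (\<tau> n (\<rho> \<beta>)))"
        using arch_mult[OF sfl whA y1(1) y2(1)] by simp
      moreover have "wh (t (\<tau> n \<beta>)) > 0" "wh (t (\<tau> n (\<rho> \<beta>))) > 0"
        using arch_pos[OF sfl whA] y1 y2 by auto
      ultimately show ?thesis unfolding lnap F_def by (simp add: ln_mult)
    qed
    have "(\<Sum>n\<in>I. ln (abs_place l wh (inv (\<tau> m) (\<tau> n (\<beta> * \<rho> \<beta>))))) =
          (\<Sum>n\<in>I. c * (F (\<tau> n) + F (\<tau> n \<circ> \<rho>)))"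
      using trm unfolding t_def by (intro sum.cong) auto
    also have "\<dots> = c * (\<Sum>n\<in>I. F (\<tau> n) + F (\<tau> n \<circ> \<rho>))" by (simp add: sum_distrib_left)
    also have "\<dots> = 0" using sum2[OF F0] by simp
    finally show ?thesis .
  qed
  show ?thesis using part1 part2 part3 by (simp add: I_def)
qed


end
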